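(* Let $f=\frac1n\sum_{z=1}^nf_z$ where each $\nabla f_z$ is $L$-Lipschitz and $\|\nabla f_z(x)\|\le l$ for all $x,z$, let $b\ge1$, $n\ge8b$, and let $\eta$ be small enough that $C=b\left[\frac{(b-\frac{\eta^2L^2n}{b}-\eta n)(1-\eta L)}{1+2\eta}-\frac{L^3\eta^2n}{2b}\right]^{-1}>0$ and $\mathbb{E}[\|\tilde x^{k+1}-\tilde x^{k}\|^2]\le C\,\mathbb{E}[f(\tilde x^{k})-f(\tilde x^{k+1})]$ for the SCSG epochs. Let $\tilde x^0$ be given, let $\tilde x^1=\tilde x^0-r\nabla f_i(\tilde x^0)$ with $i$ uniform in $[n]$, and let $\tilde x^2,\dots,\tilde x^{\mathcal{K}}$ be produced by successive SCSG epochs (see context). Suppose $\mathbb{E}[f(\tilde x^{\mathcal{K}})]-f(\tilde x^0)\ge-f_{thres}$. Then $$\mathbb{E}[\|\tilde x^{\mathcal{K}}-\tilde x^0\|^2]\le2\mathcal{K}Cf_{thres}+\mathcal{K}CL(lr)^2+2(lr)^2.$$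
   Context: SCSG epoch from snapshot $\tilde x$: $\tilde\mu=\nabla f(\tilde x)$, $x_0=\tilde x$, $N\sim\mathrm{Geom}(n/(n+b))$ ($P(N=j)=\frac b{n+b}(\frac n{n+b})^j$), for $t=1..N$: $x_t=x_{t-1}-\eta(\nabla f_{I_t}(x_{t-1})-\nabla f_{I_t}(\tilde x)+\tilde\mu)$ with $I_t$ a uniform random size-$b$ subset of $[n]$ and $\nabla f_I=\frac1{|I|}\sum_{i\in I}\nabla f_i$; next snapshot $x_N$. *)

theory Defs
  imports "HOL-Probability.Probability"
begin

definition batch_grad :: "(nat \<Rightarrow> 'a \<Rightarrow> 'a::real_vector) \<Rightarrow> nat set \<Rightarrow> 'a \<Rightarrow> 'a" where
  "batch_grad g I x = (1 / real (card I)) *\<^sub>R (\<Sum>i\<in>I. g i x)"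

definition batch_pmf :: "nat \<Rightarrow> nat \<Rightarrow> nat set pmf" where
  "batch_pmf n b = pmf_of_set {I. I \<subseteq> {1..n} \<and> card I = b}"

fun scsg_steps :: "(nat \<Rightarrow> 'a \<Rightarrow> 'a::real_vector) \<Rightarrow> nat \<Rightarrow> nat \<Rightarrow> real \<Rightarrow> 'a \<Rightarrow> nat \<Rightarrow> 'a \<Rightarrow> 'a pmf" where
  "scsg_steps g n b \<eta> xt 0 x = return_pmf x"
| "scsg_steps g n b \<eta> xt (Suc k) x =
     bind_pmf (batch_pmf n b)
       (\<lambda>I. scsg_steps g n b \<eta> xt k
              (x - \<eta> *\<^sub>R (batch_grad g I x - batch_grad g I xt + batch_grad g {1..n} xt)))"

text \<open>One SCSG epoch from snapshot xt: N ~ Geom, P(N=j) = b/(n+b) (n/(n+b))^j; output x_N.\<close>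
definition scsg_epoch :: "(nat \<Rightarrow> 'a \<Rightarrow> 'a::real_vector) \<Rightarrow> nat \<Rightarrow> nat \<Rightarrow> real \<Rightarrow> 'a \<Rightarrow> 'a pmf" where
  "scsg_epoch g n b \<eta> xt =
     bind_pmf (geometric_pmf (real b / (real n + real b))) (\<lambda>N. scsg_steps g n b \<eta> xt N xt)"

fun snapshots :: "(nat \<Rightarrow> 'a \<Rightarrow> 'a::real_vector) \<Rightarrow> nat \<Rightarrow> nat \<Rightarrow> real \<Rightarrow> real \<Rightarrow> 'a \<Rightarrow> nat \<Rightarrow> 'a pmf" where
  "snapshots g n b \<eta> r x0 0 = return_pmf x0"
| "snapshots g n b \<eta> r x0 (Suc 0) = map_pmf (\<lambda>i. x0 - r *\<^sub>R g i x0) (pmf_of_set {1..n})"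
| "snapshots g n b \<eta> r x0 (Suc (Suc k)) =
     bind_pmf (snapshots g n b \<eta> r x0 (Suc k)) (scsg_epoch g n b \<eta>)"

definition snapshot_pair :: "(nat \<Rightarrow> 'a \<Rightarrow> 'a::real_vector) \<Rightarrow> nat \<Rightarrow> nat \<Rightarrow> real \<Rightarrow> real \<Rightarrow> 'a \<Rightarrow> nat \<Rightarrow> ('a \<times> 'a) pmf" where
  "snapshot_pair g n b \<eta> r x0 k =
     bind_pmf (snapshots g n b \<eta> r x0 k) (\<lambda>x. map_pmf (\<lambda>y. (x, y)) (scsg_epoch g n b \<eta> x))"

definition scsg_C :: "real \<Rightarrow> real \<Rightarrow> real \<Rightarrow> real \<Rightarrow> real" where
  "scsg_C n b \<eta> L =
     b * inverse ((b - \<eta>^2 * L^2 * n / b - \<eta> * n) * (1 - \<eta> * L) / (1 + 2 * \<eta>)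
                  - L^3 * \<eta>^2 * n / (2 * b))"

end

theory Submission
  imports Defs
begin

lemma taylor_bound:
  fixes F :: "'a::real_inner \<Rightarrow> real" and G :: "'a \<Rightarrow> 'a"
  assumes hF: "\<And>x. (F has_derivative (\<lambda>h. G x \<bullet> h)) (at x)"
    and hG: "\<And>x y. norm (G x - G y) \<le> L * norm (x - y)"
  shows "F y \<le> F x + G x \<bullet> (y - x) + L / 2 * (norm (y - x))^2"
    and "F y \<ge> F x + G x \<bullet> (y - x) - L / 2 * (norm (y - x))^2"
proof -
  define h where "h = y - x"
  have dF: "((\<lambda>t. F (x + t *\<^sub>R h)) has_real_derivative (G (x + t *\<^sub>R h) \<bullet> h)) (at t)" for t
  proof -
    have d1: "((\<lambda>t. x + t *\<^sub>R h) has_derivative (\<lambda>s. s *\<^sub>R h)) (at t)"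
      by (auto intro!: derivative_eq_intros)
    have "((\<lambda>t. F (x + t *\<^sub>R h)) has_derivative (\<lambda>s. G (x + t *\<^sub>R h) \<bullet> (s *\<^sub>R h))) (at t)"
      using has_derivative_compose[OF d1 hF] .
    moreover have "(\<lambda>s. G (x + t *\<^sub>R h) \<bullet> (s *\<^sub>R h)) = (*) (G (x + t *\<^sub>R h) \<bullet> h)"
      by (auto simp: fun_eq_iff)
    ultimately show ?thesis by (simp add: has_field_derivative_def)
  qed
  have key: "\<bar>(G (x + t *\<^sub>R h) - G x) \<bullet> h\<bar> \<le> L * t * (norm h)^2" if "0 \<le> t" for t
  proof -
    have "\<bar>(G (x + t *\<^sub>R h) - G x) \<bullet> h\<bar> \<le> norm (G (x + t *\<^sub>R h) - G x) * norm h"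
      by (rule Cauchy_Schwarz_ineq2)
    also have "\<dots> \<le> L * norm (t *\<^sub>R h) * norm h"
      using hG[of "x + t *\<^sub>R h" x] by (simp add: mult_right_mono)
    also have "\<dots> = L * t * (norm h)^2" using that by (simp add: power2_eq_square)
    finally show ?thesis .
  qed
  define \<phi> where "\<phi> t = F (x + t *\<^sub>R h) - t * (G x \<bullet> h) - L / 2 * t^2 * (norm h)^2" for t
  define \<psi> where "\<psi> t = F (x + t *\<^sub>R h) - t * (G x \<bullet> h) + L / 2 * t^2 * (norm h)^2" for t
  have d\<phi>: "(\<phi> has_real_derivative (G (x + t *\<^sub>R h) \<bullet> h - G x \<bullet> h - L * t * (norm h)^2)) (at t)" for t
    unfolding \<phi>_def by (rule derivative_eq_intros dF refl | simp)+
  have d\<psi>: "(\<psi> has_real_derivative (G (x + t *\<^sub>R h) \<bullet> h - G x \<bullet> h + L * t * (norm h)^2)) (at t)" for t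
    unfolding \<psi>_def by (rule derivative_eq_intros dF refl | simp)+
  have "\<phi> 1 \<le> \<phi> 0"
  proof (rule DERIV_nonpos_imp_nonincreasing[of 0 1])
    fix t :: real assume "0 \<le> t" "t \<le> 1"
    then show "\<exists>y. (\<phi> has_real_derivative y) (at t) \<and> y \<le> 0"
      using d\<phi>[of t] key[of t] by (intro exI[of _ "G (x + t *\<^sub>R h) \<bullet> h - G x \<bullet> h - L * t * (norm h)^2"])
        (auto simp: inner_diff_left)
  qed simp
  then show "F y \<le> F x + G x \<bullet> (y - x) + L / 2 * (norm (y - x))^2"
    unfolding \<phi>_def h_def by simp
  have "\<psi> 0 \<le> \<psi> 1"
  proof (rule DERIV_nonneg_imp_nondecreasing[of 0 1])
    fix t :: real assume "0 \<le> t" "t \<le> 1"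
    then show "\<exists>y. (\<psi> has_real_derivative y) (at t) \<and> y \<ge> 0"
      using d\<psi>[of t] key[of t] by (intro exI[of _ "G (x + t *\<^sub>R h) \<bullet> h - G x \<bullet> h + L * t * (norm h)^2"])
        (auto simp: inner_diff_left)
  qed simp
  then show "F y \<ge> F x + G x \<bullet> (y - x) - L / 2 * (norm (y - x))^2"
    unfolding \<psi>_def h_def by simp
qed

lemma summable_sq_geom:
  fixes q :: real assumes "0 \<le> q" "q < 1"
  shows "summable (\<lambda>n. q ^ n * real n ^ 2)"
proof -
  define s where "s = sqrt q"
  have s: "0 \<le> s" "s < 1" using assms by (auto simp: s_def real_sqrt_lt_1_iff)
  have qs: "q = s^2" using assms by (simp add: s_def)
  have "(\<lambda>n. of_nat n * s ^ n) \<longlonglongrightarrow> (0::real)"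
    using s by (intro powser_times_n_limit_0) auto
  then have "Bseq (\<lambda>n. of_nat n * s ^ n)" by (rule convergent_imp_Bseq[OF convergentI])
  then obtain B where B: "\<And>n. norm (of_nat n * s ^ n) \<le> B" by (auto simp: Bseq_def)
  have sm: "summable (\<lambda>n. s^n * of_nat n)"
    using geometric_sums_times_n[of s] s by (auto simp: sums_iff)
  show ?thesis
  proof (rule summable_comparison_test[OF _ summable_mult[OF sm, of B]])
    show "\<exists>N. \<forall>n\<ge>N. norm (q ^ n * real n ^ 2) \<le> B * (s ^ n * real n)"
    proof (intro exI allI impI)
      fix n :: nat
      have "norm (q ^ n * real n ^ 2) = (real n * s^n) * (s ^ n * real n)"
        using s by (simp add: qs power2_eq_square power_mult_distrib[symmetric] power_mult[symmetric] mult_ac)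
      also have "\<dots> \<le> B * (s ^ n * real n)"
        using B[of n] s by (intro mult_right_mono) auto
      finally show "norm (q ^ n * real n ^ 2) \<le> B * (s ^ n * real n)" .
    qed
  qed
qed

lemma geom_sq_integrable:
  assumes "p \<in> {0<..1}"
  shows "integrable (measure_pmf (geometric_pmf p)) (\<lambda>N. real N ^ 2)"
proof -
  have "summable (\<lambda>x. (1 - p) ^ x * real x ^ 2)"
    using assms by (intro summable_sq_geom) auto
  hence "summable (\<lambda>x. p * ((1 - p) ^ x * real x ^ 2))"
    by (rule summable_mult)
  thus ?thesis
    unfolding measure_pmf_eq_density using assms
    by (subst integrable_density)
       (auto simp: integrable_count_space_nat_iff mult_ac)
qed

lemma bg_bound:
  assumes "finite I" "\<And>z. z \<in> I \<Longrightarrow> norm (g z x) \<le> l" "0 \<le> l"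
  shows "norm (batch_grad g I x) \<le> l"
proof (cases "card I = 0")
  case True then show ?thesis using assms by (simp add: batch_grad_def)
next
  case False
  have "norm (\<Sum>i\<in>I. g i x) \<le> (\<Sum>i\<in>I. l)"
    by (rule order_trans[OF norm_sum sum_mono]) (use assms in auto)
  then have "norm (\<Sum>i\<in>I. g i x) \<le> real (card I) * l" by simp
  then show ?thesis using False
    by (simp add: batch_grad_def field_simps)
qed

lemma batch_support:
  assumes "b \<le> n" "I \<in> set_pmf (batch_pmf n b)"
  shows "I \<subseteq> {1..n}" "card I = b"
proof -
  have fin: "finite {I. I \<subseteq> {1..n} \<and> card I = b}"
    by (rule finite_subset[of _ "Pow {1..n}"]) auto
  have ne: "{I. I \<subseteq> {1..n} \<and> card I = b} \<noteq> {}"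
    using assms(1) by (auto intro!: exI[of _ "{1..b}"])
  show "I \<subseteq> {1..n}" "card I = b" using assms(2) set_pmf_of_set[OF ne fin]
    by (auto simp: batch_pmf_def)
qed

lemma steps_support:
  assumes bnd: "\<And>z x. z \<in> {1..n} \<Longrightarrow> norm (g z x) \<le> l" and l: "0 \<le> l" and eta: "0 \<le> \<eta>"
    and bn: "b \<le> n"
  shows "y \<in> set_pmf (scsg_steps g n b \<eta> xt N x) \<Longrightarrow> norm (y - x) \<le> 3 * \<eta> * l * real N"
proof (induction N arbitrary: x)
  case 0 then show ?case by simp
next
  case (Suc N)
  from Suc.prems obtain I where I: "I \<in> set_pmf (batch_pmf n b)"
    and y: "y \<in> set_pmf (scsg_steps g n b \<eta> xt N
              (x - \<eta> *\<^sub>R (batch_grad g I x - batch_grad g I xt + batch_grad g {1..n} xt)))"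
    by auto
  define v where "v = batch_grad g I x - batch_grad g I xt + batch_grad g {1..n} xt"
  have Isub: "I \<subseteq> {1..n}" using batch_support[OF bn I] by simp
  have finI: "finite I" using Isub finite_subset by blast
  have b1: "norm (batch_grad g I x) \<le> l" "norm (batch_grad g I xt) \<le> l"
    "norm (batch_grad g {1..n} xt) \<le> l"
    using Isub by (auto intro!: bg_bound finI bnd l)
  have "norm v \<le> norm (batch_grad g I x) + norm (batch_grad g I xt) + norm (batch_grad g {1..n} xt)"
    unfolding v_def using norm_triangle_ineq[of "batch_grad g I x - batch_grad g I xt" "batch_grad g {1..n} xt"]
      norm_triangle_ineq4[of "batch_grad g I x" "batch_grad g I xt"] by linarith
  also have "\<dots> \<le> 3 * l" using b1 by simp
  finally have nv: "norm v \<le> 3 * l" .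
  have IH: "norm (y - (x - \<eta> *\<^sub>R v)) \<le> 3 * \<eta> * l * real N"
    using Suc.IH y unfolding v_def by blast
  have "norm (y - x) \<le> norm (y - (x - \<eta> *\<^sub>R v)) + norm (\<eta> *\<^sub>R v)"
  proof -
    have "y - x = (y - (x - \<eta> *\<^sub>R v)) - \<eta> *\<^sub>R v" by simp
    then show ?thesis using norm_triangle_ineq4[of "y - (x - \<eta> *\<^sub>R v)" "\<eta> *\<^sub>R v"] by simp
  qed
  also have "\<dots> \<le> 3 * \<eta> * l * real N + \<eta> * (3 * l)"
    using IH nv eta by (auto intro!: add_mono mult_left_mono)
  finally show ?case by (simp add: algebra_simps)
qed

lemma epoch_moment:
  assumes bnd: "\<And>z x. z \<in> {1..n} \<Longrightarrow> norm (g z x) \<le> l" and l: "0 \<le> l" and eta: "0 \<le> \<eta>"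
    and bn: "b \<le> n" and b1: "1 \<le> b"
  shows "(\<integral>\<^sup>+y. ennreal ((norm (y - xt))^2) \<partial>scsg_epoch g n b \<eta> xt)
          \<le> (\<integral>\<^sup>+N. ennreal ((3 * \<eta> * l)^2 * real N ^ 2) \<partial>geometric_pmf (real b / (real n + real b)))"
    and "(\<integral>\<^sup>+N. ennreal ((3 * \<eta> * l)^2 * real N ^ 2) \<partial>geometric_pmf (real b / (real n + real b))) < \<infinity>"
proof -
  show "(\<integral>\<^sup>+y. ennreal ((norm (y - xt))^2) \<partial>scsg_epoch g n b \<eta> xt)
          \<le> (\<integral>\<^sup>+N. ennreal ((3 * \<eta> * l)^2 * real N ^ 2) \<partial>geometric_pmf (real b / (real n + real b)))"
    unfolding scsg_epoch_def nn_integral_bind_pmf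
  proof (rule nn_integral_mono)
    fix N
    have "(\<integral>\<^sup>+y. ennreal ((norm (y - xt))^2) \<partial>scsg_steps g n b \<eta> xt N xt)
          \<le> (\<integral>\<^sup>+y. ennreal ((3 * \<eta> * l)^2 * real N ^ 2) \<partial>scsg_steps g n b \<eta> xt N xt)"
    proof (rule nn_integral_mono_AE, unfold AE_measure_pmf_iff, intro ballI)
      fix y assume "y \<in> set_pmf (scsg_steps g n b \<eta> xt N xt)"
      then have "norm (y - xt) \<le> 3 * \<eta> * l * real N"
        using steps_support[where g=g and n=n and l=l and \<eta>=\<eta> and b=b] bnd l eta bn by blast
      then have "(norm (y - xt))^2 \<le> (3 * \<eta> * l * real N)^2"
        by (intro power_mono) auto
      then show "ennreal ((norm (y - xt))^2) \<le> ennreal ((3 * \<eta> * l)^2 * real N ^ 2)"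
        by (intro ennreal_leI) (simp add: power_mult_distrib)
    qed
    also have "\<dots> = ennreal ((3 * \<eta> * l)^2 * real N ^ 2)"
      by (simp add: measure_pmf.emeasure_space_1)
    finally show "(\<integral>\<^sup>+y. ennreal ((norm (y - xt))^2) \<partial>scsg_steps g n b \<eta> xt N xt)
          \<le> ennreal ((3 * \<eta> * l)^2 * real N ^ 2)" .
  qed
  have p: "real b / (real n + real b) \<in> {0<..1}" using b1 by auto
  have int: "integrable (measure_pmf (geometric_pmf (real b / (real n + real b))))
          (\<lambda>N. (3 * \<eta> * l)^2 * real N ^ 2)"
    using geom_sq_integrable[OF p] by simp
  have fin: "(\<integral>\<^sup>+N. ennreal (norm ((3 * \<eta> * l)^2 * real N ^ 2)) \<partial>geometric_pmf (real b / (real n + real b))) < \<infinity>"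
    by (rule conjunct2[OF integrable_iff_bounded[THEN iffD1, OF int]])
  have eq: "(\<lambda>N. ennreal (norm ((3 * \<eta> * l)^2 * real N ^ 2))) = (\<lambda>N::nat. ennreal ((3 * \<eta> * l)^2 * real N ^ 2))"
    by (rule ext) simp
  show "(\<integral>\<^sup>+N. ennreal ((3 * \<eta> * l)^2 * real N ^ 2) \<partial>geometric_pmf (real b / (real n + real b))) < \<infinity>"
    using fin unfolding eq .
qed

lemma weighted:
  fixes e D :: "nat \<Rightarrow> real" and m :: nat
  assumes m: "m \<ge> 1"
    and step: "\<And>k t. 1 \<le> k \<Longrightarrow> t > 0 \<Longrightarrow> e (Suc k) \<le> (1 + t) * e k + (1 + 1 / t) * D k"
  shows "e (Suc m) \<le> 2 * e 1 + 2 * m * (\<Sum>j\<in>{1..m}. D j)"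
proof -
  define S where "S i = 2 * e 1 + 2 * m * (\<Sum>j\<in>{1..i}. D j)" for i
  have "i \<le> m \<Longrightarrow> e (Suc i) \<le> (real m + real i) / (2 * real m) * S i" for i
  proof (induction i)
    case 0 then show ?case using m by (simp add: S_def)
  next
    case (Suc i)
    have mi: "real m + real i > 0" using m by simp
    have st: "e (Suc (Suc i)) \<le> (1 + 1 / (real m + real i)) * e (Suc i) + (1 + 1 / (1 / (real m + real i))) * D (Suc i)"
      using step[of "Suc i" "1 / (real m + real i)"] mi by simp
    have c1: "1 + 1 / (real m + real i) = (real m + real i + 1) / (real m + real i)"
      using mi by (simp add: field_simps)
    have c2: "1 + 1 / (1 / (real m + real i)) = real m + real i + 1" by simp
    have IH: "e (Suc i) \<le> (real m + real i) / (2 * real m) * S i" using Suc by simp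
    have "e (Suc (Suc i)) \<le> (real m + real i + 1) / (real m + real i) * e (Suc i) + (real m + real i + 1) * D (Suc i)"
      using st by (simp only: c1 c2)
    also have "\<dots> \<le> (real m + real i + 1) / (real m + real i) * ((real m + real i) / (2 * real m) * S i) + (real m + real i + 1) * D (Suc i)"
      using IH mi by (intro add_mono mult_left_mono) auto
    also have "\<dots> = (real m + real i + 1) / (2 * real m) * (S i + 2 * real m * D (Suc i))"
    proof -
      have h1: "real m + real i \<noteq> 0" "real m \<noteq> 0" using mi m by auto
      have "(real m + real i + 1) / (real m + real i) * ((real m + real i) / (2 * real m) * S i)
            = (real m + real i + 1) / (2 * real m) * S i" using h1 by simp
      moreover have "(real m + real i + 1) * D (Suc i) = (real m + real i + 1) / (2 * real m) * (2 * real m * D (Suc i))"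
        using h1 by simp
      ultimately show ?thesis by (simp add: distrib_left)
    qed
    also have "S i + 2 * real m * D (Suc i) = S (Suc i)"
      by (simp add: S_def sum.cl_ivl_Suc algebra_simps)
    finally show ?case by (simp add: add_ac)
  qed
  from this[of m] show ?thesis using m by (simp add: S_def)
qed

lemma sq_split:
  fixes a b :: "'a::real_inner"
  assumes t: "t > 0"
  shows "(norm (a + b))^2 \<le> (1 + t) * (norm a)^2 + (1 + 1 / t) * (norm b)^2"
proof -
  have "(norm (a + b))^2 = (norm a)^2 + 2 * (a \<bullet> b) + (norm b)^2"
    by (simp add: power2_norm_eq_inner inner_add_left inner_add_right inner_commute)
  moreover have "a \<bullet> b \<le> norm a * norm b" by (rule norm_cauchy_schwarz)
  moreover have "2 * (norm a * norm b) \<le> t * (norm a)^2 + (norm b)^2 / t"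
  proof -
    have "0 \<le> (t * norm a - norm b)^2 / t" using t by simp
    also have "\<dots> = t * (norm a)^2 + (norm b)^2 / t - 2 * (norm a * norm b)"
      using t by (simp add: field_simps power2_eq_square)
    finally show ?thesis by simp
  qed
  ultimately show ?thesis by (simp add: algebra_simps)
qed

lemma snap_moment:
  fixes g :: "nat \<Rightarrow> 'a::real_inner \<Rightarrow> 'a"
  assumes bnd: "\<And>z x. z \<in> {1..n} \<Longrightarrow> norm (g z x) \<le> l" and l: "0 \<le> l" and eta: "0 \<le> \<eta>"
    and bn: "b \<le> n" and b1: "1 \<le> b"
  shows "(\<integral>\<^sup>+x. ennreal ((norm (x - x0))^2) \<partial>snapshots g n b \<eta> r x0 k) < \<infinity>"
proof -
  define A where "A = (\<integral>\<^sup>+N. ennreal ((3 * \<eta> * l)^2 * real N ^ 2) \<partial>geometric_pmf (real b / (real n + real b)))"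
  have A: "A < \<infinity>" unfolding A_def by (rule epoch_moment(2)[OF bnd l eta bn b1])
  have ne: "{1..n} \<noteq> {}" using bn b1 by auto
  have P1: "(\<integral>\<^sup>+x. ennreal ((norm (x - x0))^2) \<partial>snapshots g n b \<eta> r x0 (Suc i)) < \<infinity>" for i
  proof (induction i)
    case 0
    have "(\<integral>\<^sup>+x. ennreal ((norm (x - x0))^2) \<partial>snapshots g n b \<eta> r x0 (Suc 0))
       \<le> (\<integral>\<^sup>+x. ennreal ((\<bar>r\<bar> * l)^2) \<partial>snapshots g n b \<eta> r x0 (Suc 0))"
    proof (rule nn_integral_mono_AE, unfold AE_measure_pmf_iff, intro ballI)
      fix x assume "x \<in> set_pmf (snapshots g n b \<eta> r x0 (Suc 0))"
      then obtain i where i: "i \<in> {1..n}" and x: "x = x0 - r *\<^sub>R g i x0"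
        using ne by auto
      have "norm (x - x0) \<le> \<bar>r\<bar> * l" using bnd[OF i, of x0] x
        by (simp add: mult_left_mono)
      then show "ennreal ((norm (x - x0))^2) \<le> ennreal ((\<bar>r\<bar> * l)^2)"
        by (intro ennreal_leI power_mono) auto
    qed
    also have "\<dots> < \<infinity>" by (simp add: measure_pmf.emeasure_space_1)
    finally show ?case .
  next
    case (Suc i)
    define M where "M = snapshots g n b \<eta> r x0 (Suc i)"
    have "(\<integral>\<^sup>+x. ennreal ((norm (x - x0))^2) \<partial>snapshots g n b \<eta> r x0 (Suc (Suc i)))
        = (\<integral>\<^sup>+x. \<integral>\<^sup>+y. ennreal ((norm (y - x0))^2) \<partial>scsg_epoch g n b \<eta> x \<partial>M)"
      by (simp add: M_def)
    also have "\<dots> \<le> (\<integral>\<^sup>+x. 2 * A + 2 * ennreal ((norm (x - x0))^2) \<partial>M)"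
    proof (rule nn_integral_mono)
      fix x
      have "(\<integral>\<^sup>+y. ennreal ((norm (y - x0))^2) \<partial>scsg_epoch g n b \<eta> x)
          \<le> (\<integral>\<^sup>+y. 2 * ennreal ((norm (y - x))^2) + 2 * ennreal ((norm (x - x0))^2) \<partial>scsg_epoch g n b \<eta> x)"
      proof (rule nn_integral_mono)
        fix y
        have "(norm (y - x0))^2 \<le> (1 + 1) * (norm (y - x))^2 + (1 + 1 / 1) * (norm (x - x0))^2"
          using sq_split[of 1 "y - x" "x - x0"] by simp
        then have "ennreal ((norm (y - x0))^2) \<le> ennreal (2 * (norm (y - x))^2 + 2 * (norm (x - x0))^2)"
          by (intro ennreal_leI) simp
        also have "\<dots> = 2 * ennreal ((norm (y - x))^2) + 2 * ennreal ((norm (x - x0))^2)"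
          by (simp add: ennreal_plus ennreal_mult)
        finally show "ennreal ((norm (y - x0))^2) \<le> 2 * ennreal ((norm (y - x))^2) + 2 * ennreal ((norm (x - x0))^2)" .
      qed
      also have "\<dots> = 2 * (\<integral>\<^sup>+y. ennreal ((norm (y - x))^2) \<partial>scsg_epoch g n b \<eta> x) + 2 * ennreal ((norm (x - x0))^2)"
        by (simp add: nn_integral_add nn_integral_cmult measure_pmf.emeasure_space_1)
      also have "\<dots> \<le> 2 * A + 2 * ennreal ((norm (x - x0))^2)"
        using epoch_moment(1)[OF bnd l eta bn b1, where xt=x] unfolding A_def
        by (intro add_mono mult_left_mono) auto
      finally show "(\<integral>\<^sup>+y. ennreal ((norm (y - x0))^2) \<partial>scsg_epoch g n b \<eta> x) \<le> 2 * A + 2 * ennreal ((norm (x - x0))^2)" .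
    qed
    also have "\<dots> = 2 * A + 2 * (\<integral>\<^sup>+x. ennreal ((norm (x - x0))^2) \<partial>M)"
      by (simp add: nn_integral_add nn_integral_cmult measure_pmf.emeasure_space_1)
    also have "\<dots> < \<infinity>" using A Suc.IH unfolding M_def
      by (simp add: ennreal_mult_less_top)
    finally show ?case .
  qed
  show ?thesis
  proof (cases k)
    case 0 then show ?thesis by simp
  next
    case (Suc i) then show ?thesis using P1 by simp
  qed
qed

theorem lemma26:
  fixes fc :: "nat \<Rightarrow> 'a::euclidean_space \<Rightarrow> real"
    and g :: "nat \<Rightarrow> 'a \<Rightarrow> 'a"
    and f :: "'a \<Rightarrow> real"
    and n b K :: nat and L l \<eta> r fthres :: real and x0 :: 'a
  assumes f_def: "\<And>x. f x = (1 / real n) * (\<Sum>z=1..n. fc z x)"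
    and grad: "\<And>z x. z \<in> {1..n} \<Longrightarrow> (fc z has_derivative (\<lambda>h. g z x \<bullet> h)) (at x)"
    and lip: "\<And>z x y. z \<in> {1..n} \<Longrightarrow> norm (g z x - g z y) \<le> L * norm (x - y)"
    and bnd: "\<And>z x. z \<in> {1..n} \<Longrightarrow> norm (g z x) \<le> l"
    and b1: "b \<ge> 1" and nb: "n \<ge> 8 * b"
    and eta: "\<eta> > 0" and r: "r > 0"
    and Cpos: "scsg_C n b \<eta> L > 0"
    and descent: "\<And>k. 1 \<le> k \<Longrightarrow> k < K \<Longrightarrow>
         measure_pmf.expectation (snapshot_pair g n b \<eta> r x0 k) (\<lambda>(x, y). (norm (y - x))^2)
         \<le> scsg_C n b \<eta> L * measure_pmf.expectation (snapshot_pair g n b \<eta> r x0 k) (\<lambda>(x, y). f x - f y)"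
    and thres: "measure_pmf.expectation (snapshots g n b \<eta> r x0 K) f - f x0 \<ge> - fthres"
  shows "measure_pmf.expectation (snapshots g n b \<eta> r x0 K) (\<lambda>x. (norm (x - x0))^2)
         \<le> 2 * K * scsg_C n b \<eta> L * fthres + K * scsg_C n b \<eta> L * L * (l * r)^2 + 2 * (l * r)^2"
proof -
  define C where "C = scsg_C n b \<eta> L"
  define S where "S k = snapshots g n b \<eta> r x0 k" for k
  define P where "P k = snapshot_pair g n b \<eta> r x0 k" for k
  define e where "e k = measure_pmf.expectation (S k) (\<lambda>x. (norm (x - x0))^2)" for k
  define F where "F k = measure_pmf.expectation (S k) f" for k
  define D where "D k = measure_pmf.expectation (P k) (\<lambda>p. (norm (snd p - fst p))^2)" for k
  have C0: "C > 0" using Cpos by (simp add: C_def)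
  have bn: "b \<le> n" and n1: "1 \<le> n" using nb b1 by auto
  have one: "1 \<in> {1..n}" using n1 by simp
  have l0: "0 \<le> l" using bnd[OF one, of x0] norm_ge_zero[of "g 1 x0"] by linarith
  have L0: "0 \<le> L"
  proof -
    obtain u :: 'a where u: "u \<in> Basis" using nonempty_Basis by blast
    have "0 \<le> norm (g 1 u - g 1 0)" by simp
    also have "\<dots> \<le> L * norm (u - 0)" by (rule lip[OF one])
    finally show ?thesis using u by simp
  qed
  have bnd': "\<And>z x. z \<in> {1..n} \<Longrightarrow> norm (g z x) \<le> l" by (rule bnd)
  have mom: "integrable (S k) (\<lambda>x. (norm (x - x0))^2)" for k
  proof -
    have "(\<integral>\<^sup>+x. ennreal ((norm (x - x0))^2) \<partial>S k) < \<infinity>"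
      unfolding S_def by (rule snap_moment[OF bnd' l0 less_imp_le[OF eta] bn b1])
    then show ?thesis by (simp add: integrable_iff_bounded)
  qed
  have fbound: "\<bar>f x - f x0\<bar> \<le> l * norm (x - x0) + L / 2 * (norm (x - x0))^2" for x
  proof -
    have "\<bar>fc z x - fc z x0\<bar> \<le> l * norm (x - x0) + L / 2 * (norm (x - x0))^2" if z: "z \<in> {1..n}" for z
    proof -
      have t1: "fc z x \<le> fc z x0 + g z x0 \<bullet> (x - x0) + L / 2 * (norm (x - x0))^2"
        and t2: "fc z x \<ge> fc z x0 + g z x0 \<bullet> (x - x0) - L / 2 * (norm (x - x0))^2"
        using taylor_bound[where F="fc z" and G="g z" and L=L and y=x and x=x0] grad[OF z] lip[OF z] by auto
      have "\<bar>g z x0 \<bullet> (x - x0)\<bar> \<le> norm (g z x0) * norm (x - x0)" by (rule Cauchy_Schwarz_ineq2)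
      also have "\<dots> \<le> l * norm (x - x0)" using bnd[OF z] by (simp add: mult_right_mono)
      finally show ?thesis using t1 t2 by linarith
    qed
    then have "\<bar>\<Sum>z=1..n. fc z x - fc z x0\<bar> \<le> (\<Sum>z=1..n. l * norm (x - x0) + L / 2 * (norm (x - x0))^2)"
      by (intro order_trans[OF sum_abs sum_mono]) auto
    also have "\<dots> = real n * (l * norm (x - x0) + L / 2 * (norm (x - x0))^2)" by simp
    finally have h: "\<bar>\<Sum>z=1..n. fc z x - fc z x0\<bar> \<le> real n * (l * norm (x - x0) + L / 2 * (norm (x - x0))^2)" .
    have "f x - f x0 = (1 / real n) * (\<Sum>z=1..n. fc z x - fc z x0)"
      by (simp add: f_def sum_subtractf right_diff_distrib)
    then have "\<bar>f x - f x0\<bar> = (1 / real n) * \<bar>\<Sum>z=1..n. fc z x - fc z x0\<bar>" by (simp add: abs_mult)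
    also have "\<dots> \<le> (1 / real n) * (real n * (l * norm (x - x0) + L / 2 * (norm (x - x0))^2))"
      using h by (intro mult_left_mono) auto
    also have "\<dots> = l * norm (x - x0) + L / 2 * (norm (x - x0))^2" using n1 by simp
    finally show ?thesis .
  qed
  have fint: "integrable (S k) f" for k
  proof (rule Bochner_Integration.integrable_bound)
    show "integrable (S k) (\<lambda>x. (\<bar>f x0\<bar> + l) + (l + L / 2) * (norm (x - x0))^2)"
      using mom[of k] by simp
    show "f \<in> borel_measurable (measure_pmf (S k))" by simp
    show "AE x in measure_pmf (S k). norm (f x) \<le> norm ((\<bar>f x0\<bar> + l) + (l + L / 2) * (norm (x - x0))^2)"
    proof (rule AE_I2)
      fix x
      have q: "norm (x - x0) \<le> 1 + (norm (x - x0))^2"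
        using sum_squares_ge_zero[of "norm (x - x0) - 1" 0]
        by (simp add: power2_eq_square algebra_simps)
          (smt (verit) power2_eq_square zero_le_power2 power2_diff)
      have "\<bar>f x\<bar> \<le> \<bar>f x0\<bar> + l * norm (x - x0) + L / 2 * (norm (x - x0))^2"
        using fbound[of x] by linarith
      also have "\<dots> \<le> \<bar>f x0\<bar> + l * (1 + (norm (x - x0))^2) + L / 2 * (norm (x - x0))^2"
        using q l0 by (simp add: mult_left_mono)
      finally have "\<bar>f x\<bar> \<le> (\<bar>f x0\<bar> + l) + (l + L / 2) * (norm (x - x0))^2"
        by (simp add: algebra_simps)
      then show "norm (f x) \<le> norm ((\<bar>f x0\<bar> + l) + (l + L / 2) * (norm (x - x0))^2)"
        using l0 L0 by simp
    qed
  qed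
  have fst_map: "map_pmf fst (P k) = S k" for k
    unfolding P_def S_def snapshot_pair_def
    by (simp add: map_bind_pmf map_pmf_comp map_pmf_const bind_return_pmf')
  have snd_map: "map_pmf snd (P (Suc j)) = S (Suc (Suc j))" for j
    unfolding P_def S_def snapshot_pair_def by (simp add: map_bind_pmf map_pmf_comp)
  have Pfst: "integrable (P k) (\<lambda>p. h (fst p))" if "integrable (S k) h" for k and h :: "'a \<Rightarrow> real"
    using that integrable_map_pmf_eq[of fst "P k" h] fst_map[of k] by simp
  have Psnd: "integrable (P (Suc j)) (\<lambda>p. h (snd p))" if "integrable (S (Suc (Suc j))) h" for j and h :: "'a \<Rightarrow> real"
    using that integrable_map_pmf_eq[of snd "P (Suc j)" h] snd_map[of j] by simp
  have Efst: "measure_pmf.expectation (S k) h = measure_pmf.expectation (P k) (\<lambda>p. h (fst p))" for k and h :: "'a \<Rightarrow> real"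
    using integral_map_pmf[of fst "P k" h] fst_map[of k] by simp
  have Esnd: "measure_pmf.expectation (S (Suc (Suc j))) h = measure_pmf.expectation (P (Suc j)) (\<lambda>p. h (snd p))" for j and h :: "'a \<Rightarrow> real"
    using integral_map_pmf[of snd "P (Suc j)" h] snd_map[of j] by simp
  have Dint: "integrable (P (Suc j)) (\<lambda>p. (norm (snd p - fst p))^2)" for j
  proof (rule Bochner_Integration.integrable_bound)
    show "integrable (P (Suc j)) (\<lambda>p. 2 * (norm (snd p - x0))^2 + 2 * (norm (fst p - x0))^2)"
      using Psnd[OF mom[of "Suc (Suc j)"]] Pfst[OF mom[of "Suc j"]] by simp
    show "(\<lambda>p. (norm (snd p - fst p))^2) \<in> borel_measurable (measure_pmf (P (Suc j)))" by simp
    show "AE p in measure_pmf (P (Suc j)). norm ((norm (snd p - fst p))^2) \<le> norm (2 * (norm (snd p - x0))^2 + 2 * (norm (fst p - x0))^2)"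
    proof (rule AE_I2)
      fix p :: "'a \<times> 'a"
      have "(norm ((snd p - x0) + (x0 - fst p)))^2 \<le> (1 + 1) * (norm (snd p - x0))^2 + (1 + 1 / 1) * (norm (x0 - fst p))^2"
        by (rule sq_split) simp
      then show "norm ((norm (snd p - fst p))^2) \<le> norm (2 * (norm (snd p - x0))^2 + 2 * (norm (fst p - x0))^2)"
        by (simp add: norm_minus_commute)
    qed
  qed
  have step: "e (Suc k) \<le> (1 + t) * e k + (1 + 1 / t) * D k" if "1 \<le> k" "t > 0" for k t
  proof -
    obtain j where k: "k = Suc j" using \<open>1 \<le> k\<close> by (cases k) auto
    have "e (Suc k) = measure_pmf.expectation (P k) (\<lambda>p. (norm (snd p - x0))^2)"
      unfolding e_def k by (rule Esnd)
    also have "\<dots> \<le> measure_pmf.expectation (P k) (\<lambda>p. (1 + t) * (norm (fst p - x0))^2 + (1 + 1 / t) * (norm (snd p - fst p))^2)"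
    proof (rule integral_mono)
      show "integrable (P k) (\<lambda>p. (norm (snd p - x0))^2)"
        unfolding k by (rule Psnd[OF mom])
      show "integrable (P k) (\<lambda>p. (1 + t) * (norm (fst p - x0))^2 + (1 + 1 / t) * (norm (snd p - fst p))^2)"
        unfolding k using Pfst[OF mom[of "Suc j"]] Dint[of j] by simp
      fix p :: "'a \<times> 'a"
      show "(norm (snd p - x0))^2 \<le> (1 + t) * (norm (fst p - x0))^2 + (1 + 1 / t) * (norm (snd p - fst p))^2"
        using sq_split[OF \<open>t > 0\<close>, of "fst p - x0" "snd p - fst p"] by simp
    qed
    also have "\<dots> = (1 + t) * e k + (1 + 1 / t) * D k"
      unfolding e_def D_def Efst[of k]
      using Pfst[OF mom[of k]] Dint[of j] unfolding k by simp
    finally show ?thesis .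
  qed
  have D0: "D k \<ge> 0" for k unfolding D_def by simp
  have Fdiff: "measure_pmf.expectation (P k) (\<lambda>(x, y). f x - f y) = F k - F (Suc k)" if "1 \<le> k" for k
  proof -
    obtain j where k: "k = Suc j" using \<open>1 \<le> k\<close> by (cases k) auto
    have "(\<lambda>(x, y). f x - f y) = (\<lambda>p. f (fst p) - f (snd p))" by (auto simp: fun_eq_iff)
    then have "measure_pmf.expectation (P k) (\<lambda>(x, y). f x - f y)
       = measure_pmf.expectation (P k) (\<lambda>p. f (fst p)) - measure_pmf.expectation (P k) (\<lambda>p. f (snd p))"
      unfolding k using Pfst[OF fint[of "Suc j"]] Psnd[OF fint[of "Suc (Suc j)"]] by simp
    also have "\<dots> = F k - F (Suc k)" unfolding F_def k Efst[of "Suc j"] Esnd[of j] ..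
    finally show ?thesis .
  qed
  have desc: "D k \<le> C * (F k - F (Suc k))" if "1 \<le> k" "k < K" for k
  proof -
    have eq: "(\<lambda>(x, y). (norm (y - x))^2) = (\<lambda>p. (norm (snd p - fst p))^2)" by (auto simp: fun_eq_iff)
    have "D k = measure_pmf.expectation (P k) (\<lambda>(x, y). (norm (y - x))^2)" unfolding D_def eq ..
    then show ?thesis using descent[OF that] Fdiff[OF that(1)] unfolding C_def P_def by simp
  qed
  have S1: "measure_pmf.expectation (S 1) h = (\<Sum>i=1..n. h (x0 - r *\<^sub>R g i x0)) / real n" for h :: "'a \<Rightarrow> real"
  proof -
    have "S 1 = map_pmf (\<lambda>i. x0 - r *\<^sub>R g i x0) (pmf_of_set {1..n})"
      unfolding S_def by (simp add: One_nat_def)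
    then show ?thesis using n1 by (simp add: integral_pmf_of_set)
  qed
  have e1: "e 1 \<le> (l * r)^2"
  proof -
    have "(\<Sum>i=1..n. (norm (x0 - r *\<^sub>R g i x0 - x0))^2) \<le> (\<Sum>i=1..n. (l * r)^2)"
    proof (rule sum_mono)
      fix i assume i: "i \<in> {1..n}"
      have "norm (x0 - r *\<^sub>R g i x0 - x0) = r * norm (g i x0)" using r by simp
      also have "\<dots> \<le> l * r" using bnd[OF i, of x0] r by (simp add: mult.commute mult_left_mono)
      finally show "(norm (x0 - r *\<^sub>R g i x0 - x0))^2 \<le> (l * r)^2"
        by (intro power_mono) auto
    qed
    then have "(\<Sum>i=1..n. (norm (x0 - r *\<^sub>R g i x0 - x0))^2) \<le> real n * (l * r)^2" by simp
    then show ?thesis unfolding e_def S1 using n1 by (simp add: divide_le_eq mult.commute)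
  qed
  define G where "G = (\<Sum>z=1..n. g z x0)"
  define \<delta> where "\<delta> = L / 2 * (l * r)^2"
  have fi: "f (x0 - r *\<^sub>R g i x0) \<le> f x0 - r / real n * (G \<bullet> g i x0) + \<delta>" if i: "i \<in> {1..n}" for i
  proof -
    have "fc z (x0 - r *\<^sub>R g i x0) \<le> fc z x0 - r * (g z x0 \<bullet> g i x0) + \<delta>" if z: "z \<in> {1..n}" for z
    proof -
      have t: "fc z (x0 - r *\<^sub>R g i x0) \<le> fc z x0 + g z x0 \<bullet> (x0 - r *\<^sub>R g i x0 - x0) + L / 2 * (norm (x0 - r *\<^sub>R g i x0 - x0))^2"
        using taylor_bound(1)[where F="fc z" and G="g z" and L=L and y="x0 - r *\<^sub>R g i x0" and x=x0] grad[OF z] lip[OF z]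
        by auto
      have "norm (x0 - r *\<^sub>R g i x0 - x0) = r * norm (g i x0)" using r by simp
      also have "\<dots> \<le> l * r" using bnd[OF i, of x0] r by (simp add: mult.commute mult_left_mono)
      finally have sq: "(norm (x0 - r *\<^sub>R g i x0 - x0))^2 \<le> (l * r)^2" by (intro power_mono) auto
      have "L / 2 * (norm (x0 - r *\<^sub>R g i x0 - x0))^2 \<le> \<delta>"
        using mult_left_mono[OF sq, of "L / 2"] L0 unfolding \<delta>_def by simp
      moreover have "g z x0 \<bullet> (x0 - r *\<^sub>R g i x0 - x0) = - r * (g z x0 \<bullet> g i x0)" by simp
      ultimately show ?thesis using t by linarith
    qed
    then have "(\<Sum>z=1..n. fc z (x0 - r *\<^sub>R g i x0)) \<le> (\<Sum>z=1..n. fc z x0 - r * (g z x0 \<bullet> g i x0) + \<delta>)"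
      by (rule sum_mono)
    also have "\<dots> = (\<Sum>z=1..n. fc z x0) - r * (G \<bullet> g i x0) + real n * \<delta>"
      by (simp add: G_def sum.distrib sum_subtractf sum_distrib_left inner_sum_left)
    finally have h: "(\<Sum>z=1..n. fc z (x0 - r *\<^sub>R g i x0)) \<le> (\<Sum>z=1..n. fc z x0) - r * (G \<bullet> g i x0) + real n * \<delta>" .
    have "f (x0 - r *\<^sub>R g i x0) = (1 / real n) * (\<Sum>z=1..n. fc z (x0 - r *\<^sub>R g i x0))" by (rule f_def)
    also have "\<dots> \<le> (1 / real n) * ((\<Sum>z=1..n. fc z x0) - r * (G \<bullet> g i x0) + real n * \<delta>)"
      using h by (intro mult_left_mono) auto
    also have "\<dots> = f x0 - r / real n * (G \<bullet> g i x0) + \<delta>"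
      using n1 by (simp add: f_def field_simps)
    finally show ?thesis .
  qed
  have F1: "F 1 \<le> f x0 + \<delta>"
  proof -
    have "(\<Sum>i=1..n. f (x0 - r *\<^sub>R g i x0)) \<le> (\<Sum>i=1..n. f x0 - r / real n * (G \<bullet> g i x0) + \<delta>)"
      by (rule sum_mono) (rule fi)
    also have "\<dots> = real n * f x0 - r / real n * (G \<bullet> G) + real n * \<delta>"
      by (simp add: G_def sum.distrib sum_subtractf sum_distrib_left inner_sum_right)
    also have "\<dots> \<le> real n * f x0 + real n * \<delta>"
      using r n1 by simp
    finally have "(\<Sum>i=1..n. f (x0 - r *\<^sub>R g i x0)) / real n \<le> (real n * f x0 + real n * \<delta>) / real n"
      using n1 by (simp add: divide_right_mono)
    also have "\<dots> = f x0 + \<delta>" using n1 by (simp add: field_simps)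
    finally show ?thesis unfolding F_def S1 .
  qed
  have e0: "e 0 = 0" unfolding e_def S_def by simp
  have thr: "F K - f x0 \<ge> - fthres" using thres unfolding F_def S_def .
  have goal: "e K \<le> 2 * K * C * fthres + K * C * L * (l * r)^2 + 2 * (l * r)^2"
  proof (cases K)
    case 0 then show ?thesis using e0 by simp
  next
    case (Suc m)
    show ?thesis
    proof (cases m)
      case 0
      have "fthres + \<delta> \<ge> 0" using thr F1 Suc 0 by simp
      then have "0 \<le> C * (fthres + \<delta>)" using C0 by simp
      moreover have "e 1 \<le> (l * r)^2" by (rule e1)
      moreover have "0 \<le> (l * r)^2" by simp
      moreover have "e K = e 1" using Suc 0 by simp
      moreover have "real (2 * K) * C * fthres + real K * C * L * (l * r)^2 = 2 * (C * (fthres + \<delta>))"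
        using Suc 0 unfolding \<delta>_def by (simp add: algebra_simps)
      ultimately show ?thesis by linarith
    next
      case (Suc m')
      have m1: "m \<ge> 1" using Suc by simp
      have w: "e (Suc m) \<le> 2 * e 1 + 2 * m * (\<Sum>j\<in>{1..m}. D j)"
        by (rule weighted[where e=e and D=D, OF m1 step])
      have tel: "(\<Sum>j\<in>{1..i}. F j - F (Suc j)) = F 1 - F (Suc i)" for i
        by (induction i) (simp_all add: sum.cl_ivl_Suc)
      have "(\<Sum>j\<in>{1..m}. D j) \<le> (\<Sum>j\<in>{1..m}. C * (F j - F (Suc j)))"
        by (rule sum_mono) (rule desc, use \<open>K = Suc m\<close> in auto)
      also have "\<dots> = C * (F 1 - F (Suc m))" by (simp only: sum_distrib_left[symmetric] tel)
      finally have sD: "(\<Sum>j\<in>{1..m}. D j) \<le> C * (F 1 - F K)" using \<open>K = Suc m\<close> by simp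
      have sD0: "(\<Sum>j\<in>{1..m}. D j) \<ge> 0" using D0 by (simp add: sum_nonneg)
      have "F 1 - F K \<ge> 0"
      proof (rule ccontr)
        assume "\<not> ?thesis"
        then have "C * (F 1 - F K) < 0" using C0 by (simp add: mult_pos_neg)
        then show False using sD sD0 by linarith
      qed
      have X: "F 1 - F K \<le> fthres + \<delta>" using F1 thr by linarith
      have "C * (F 1 - F K) \<le> C * (fthres + \<delta>)" using X C0 by simp
      then have sD2: "(\<Sum>j\<in>{1..m}. D j) \<le> C * (fthres + \<delta>)" using sD by linarith
      have Y: "0 \<le> C * (fthres + \<delta>)" using sD2 sD0 by linarith
      have "e K \<le> 2 * e 1 + 2 * m * (\<Sum>j\<in>{1..m}. D j)" using w \<open>K = Suc m\<close> by simp
      also have "\<dots> \<le> 2 * (l * r)^2 + 2 * m * (C * (fthres + \<delta>))"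
        using e1 sD2 by (intro add_mono mult_left_mono) auto
      also have "\<dots> \<le> 2 * (l * r)^2 + 2 * K * (C * (fthres + \<delta>))"
        using Y \<open>K = Suc m\<close> by (intro add_mono mult_right_mono) auto
      also have "\<dots> = 2 * K * C * fthres + K * C * L * (l * r)^2 + 2 * (l * r)^2"
        unfolding \<delta>_def by (simp add: algebra_simps)
      finally show ?thesis .
    qed
  qed
  then show ?thesis unfolding e_def S_def C_def .
qed

end
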